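(* Let $P$ be an ergodic and reversible transition matrix on a finite set $\mathcal{X}$. Then $\gamma_{\mathsf{dps}}=\gamma_\star$.
   Context: $P$ is row-stochastic, ergodic (primitive), with unique stationary distribution $\pi>0$, and reversible: $\pi(x)P(x,x')=\pi(x')P(x',x)$; then $P$ has real spectrum and $\gamma_\star=1-\max\{|\lambda|:\lambda\in\sigma(P),\lambda\ne1\}$ is its absolute spectral gap. $P^\star(x,x')=\pi(x')P(x',x)/\pi(x)$; for a transition matrix $Q$ with stationary $\pi$, $\mathscr{S}_\pi(Q)=\begin{pmatrix}0&Q\\Q^\star&0\end{pmatrix}$ and $\gamma_\ddagger(Q)=1-\mu_2$ where $\mu_2$ is the second largest eigenvalue (counted with multiplicity) of $\mathscr{S}_\pi(Q)$. $\gamma_{\mathsf{dps}}=\max_{k\ge1}\gamma_\ddagger(P^k)/k$. *)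

theory Defs
  imports "Jordan_Normal_Form.Char_Poly" "HOL-Computational_Algebra.Polynomial"
begin

(* State space X = {0..<n}; transition matrices are n x n real matrices. *)

definition row_stochastic :: "nat \<Rightarrow> real mat \<Rightarrow> bool" where
  "row_stochastic n P \<longleftrightarrow> P \<in> carrier_mat n n \<and>
     (\<forall>i<n. \<forall>j<n. P $$ (i,j) \<ge> 0) \<and> (\<forall>i<n. (\<Sum>j<n. P $$ (i,j)) = 1)"

(* ergodic = primitive: some power has all entries strictly positive *)
definition primitive_mat :: "nat \<Rightarrow> real mat \<Rightarrow> bool" where
  "primitive_mat n P \<longleftrightarrow> (\<exists>k>0. \<forall>i<n. \<forall>j<n. (P ^\<^sub>m k) $$ (i,j) > 0)"

definition stationary_dist :: "nat \<Rightarrow> real mat \<Rightarrow> (nat \<Rightarrow> real) \<Rightarrow> bool" where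
  "stationary_dist n P \<pi> \<longleftrightarrow> (\<forall>i<n. \<pi> i \<ge> 0) \<and> (\<Sum>i<n. \<pi> i) = 1 \<and>
     (\<forall>j<n. (\<Sum>i<n. \<pi> i * P $$ (i,j)) = \<pi> j)"

definition reversible :: "nat \<Rightarrow> real mat \<Rightarrow> (nat \<Rightarrow> real) \<Rightarrow> bool" where
  "reversible n P \<pi> \<longleftrightarrow> (\<forall>i<n. \<forall>j<n. \<pi> i * P $$ (i,j) = \<pi> j * P $$ (j,i))"

definition time_reversal :: "nat \<Rightarrow> (nat \<Rightarrow> real) \<Rightarrow> real mat \<Rightarrow> real mat" where
  "time_reversal n \<pi> Q = mat n n (\<lambda>(i,j). \<pi> j * Q $$ (j,i) / \<pi> i)"

definition dilation :: "nat \<Rightarrow> (nat \<Rightarrow> real) \<Rightarrow> real mat \<Rightarrow> real mat" where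
  "dilation n \<pi> Q = four_block_mat (0\<^sub>m n n) Q (time_reversal n \<pi> Q) (0\<^sub>m n n)"

definition spec :: "real mat \<Rightarrow> complex set" where
  "spec A = {z. eigenvalue (map_mat complex_of_real A) z}"

definition abs_spectral_gap :: "real mat \<Rightarrow> real" where
  "abs_spectral_gap P = 1 - Max {cmod z | z. z \<in> spec P \<and> z \<noteq> 1}"

definition eigenvalues_desc :: "real mat \<Rightarrow> real list" where
  "eigenvalues_desc A = rev (sorted_list_of_multiset (proots (char_poly A)))"

definition second_eigenvalue :: "real mat \<Rightarrow> real" where
  "second_eigenvalue A = eigenvalues_desc A ! 1"

definition gamma_ddagger :: "nat \<Rightarrow> (nat \<Rightarrow> real) \<Rightarrow> real mat \<Rightarrow> real" where
  "gamma_ddagger n \<pi> Q = 1 - second_eigenvalue (dilation n \<pi> Q)"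

(* gamma_dps = max_{k>=1} gamma_ddagger(P^k)/k, written as a supremum *)
definition gamma_dps :: "nat \<Rightarrow> (nat \<Rightarrow> real) \<Rightarrow> real mat \<Rightarrow> real" where
  "gamma_dps n \<pi> P = (SUP k\<in>{1..}. gamma_ddagger n \<pi> (P ^\<^sub>m k) / real k)"

end

theory Submission
  imports Defs "Jordan_Normal_Form.Schur_Decomposition"
begin


lemma mult_entry:
  fixes A B :: "'a::comm_semiring_1 mat"
  assumes "A \<in> carrier_mat n n" "B \<in> carrier_mat n n" "i < n" "j < n"
  shows "(A * B) $$ (i,j) = (\<Sum>l<n. A $$ (i,l) * B $$ (l,j))"
  using assms by (simp add: scalar_prod_def atLeast0LessThan)

lemma mult_vec_entry:
  fixes A :: "'a::comm_semiring_1 mat"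
  assumes "A \<in> carrier_mat n n" "v \<in> carrier_vec n" "i < n"
  shows "(A *\<^sub>v v) $ i = (\<Sum>l<n. A $$ (i,l) * v $ l)"
  using assms by (simp add: scalar_prod_def atLeast0LessThan)

definition fixedv :: "nat \<Rightarrow> real mat \<Rightarrow> (nat \<Rightarrow> real) \<Rightarrow> bool" where
  "fixedv n W f \<longleftrightarrow> (\<forall>i<n. (\<Sum>j<n. W $$ (i,j) * f j) = f i)"

lemma fixedv_mult:
  assumes "A \<in> carrier_mat n n" "B \<in> carrier_mat n n" "fixedv n A f" "fixedv n B f"
  shows "fixedv n (A * B) f"
  unfolding fixedv_def
proof (intro allI impI)
  fix i assume i: "i < n"
  have "(\<Sum>j<n. (A*B) $$ (i,j) * f j) = (\<Sum>j<n. \<Sum>l<n. A $$ (i,l) * B $$ (l,j) * f j)"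
    using assms i by (intro sum.cong refl) (simp add: mult_entry[OF assms(1,2) i] sum_distrib_right del: index_mult_mat)
  also have "\<dots> = (\<Sum>l<n. A $$ (i,l) * (\<Sum>j<n. B $$ (l,j) * f j))"
    by (subst sum.swap) (simp add: sum_distrib_left mult.assoc)
  also have "\<dots> = (\<Sum>l<n. A $$ (i,l) * f l)"
    using assms(4) unfolding fixedv_def by simp
  also have "\<dots> = f i" using assms(3) i unfolding fixedv_def by simp
  finally show "(\<Sum>j<n. (A*B) $$ (i,j) * f j) = f i" .
qed

lemma fixedv_one: "fixedv n (1\<^sub>m n) f"
  unfolding fixedv_def
proof (intro allI impI)
  fix i assume i: "i < n"
  have "(\<Sum>j<n. (1\<^sub>m n :: real mat) $$ (i,j) * f j) = (\<Sum>j<n. (if j = i then f j else 0))"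
    by (rule sum.cong) (use i in auto)
  also have "\<dots> = f i" using i by simp
  finally show "(\<Sum>j<n. (1\<^sub>m n :: real mat) $$ (i,j) * f j) = f i" .
qed

lemma fixedv_pow:
  assumes "A \<in> carrier_mat n n" "fixedv n A f"
  shows "fixedv n (A ^\<^sub>m k) f"
proof (induction k)
  case 0 then show ?case using assms fixedv_one by simp
next
  case (Suc k) then show ?case using assms fixedv_mult[of "A ^\<^sub>m k" n A f] by simp
qed

lemma max_principle:
  fixes W :: "real mat" and f :: "nat \<Rightarrow> real"
  assumes pos: "\<forall>i<n. \<forall>j<n. W $$ (i,j) > 0"
    and rs: "fixedv n W (\<lambda>_. 1)" and fx: "fixedv n W f" and n: "n > 0"
  shows "\<forall>i<n. \<forall>j<n. f i = f j"
proof -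
  define m where "m = Max (f ` {..<n})"
  have "m \<in> f ` {..<n}" unfolding m_def using n by (intro Max_in) auto
  then obtain i0 where i0: "i0 < n" "f i0 = m" by auto
  have le: "\<forall>j<n. f j \<le> m" unfolding m_def by auto
  have "(\<Sum>j<n. W $$ (i0,j) * (m - f j)) = m * (\<Sum>j<n. W $$ (i0,j)) - (\<Sum>j<n. W $$ (i0,j) * f j)"
    by (simp add: algebra_simps sum_subtractf sum_distrib_left)
  also have "\<dots> = 0" using rs fx i0 unfolding fixedv_def by simp
  finally have z: "(\<Sum>j<n. W $$ (i0,j) * (m - f j)) = 0" .
  have nn: "\<forall>x\<in>{..<n}. 0 \<le> W $$ (i0, x) * (m - f x)" using le pos i0
      by (metis diff_ge_0_iff_ge lessThan_iff less_eq_real_def mult_nonneg_nonneg)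
  have "\<forall>j\<in>{..<n}. W $$ (i0,j) * (m - f j) = 0"
    using sum_nonneg_eq_0_iff[of "{..<n}" "\<lambda>j. W $$ (i0,j) * (m - f j)"] z nn by auto
  then have "\<forall>j<n. f j = m"
  proof (intro allI impI)
    fix j assume h: "\<forall>j\<in>{..<n}. W $$ (i0, j) * (m - f j) = 0" and j: "j < n"
    then have "W $$ (i0, j) * (m - f j) = 0" by auto
    moreover have "W $$ (i0, j) > 0" using pos i0 j by auto
    ultimately show "f j = m" by simp
  qed
  then show ?thesis by auto
qed



lemma rev_identity:
  fixes a b :: "nat \<Rightarrow> 'a::real_field"
  assumes "reversible n P \<pi>"
  shows "(\<Sum>i<n. of_real (\<pi> i) * a i * (\<Sum>j<n. of_real (P $$ (i,j)) * b j))
       = (\<Sum>i<n. of_real (\<pi> i) * b i * (\<Sum>j<n. of_real (P $$ (i,j)) * a j))"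
proof -
  have "(\<Sum>i<n. of_real (\<pi> i) * a i * (\<Sum>j<n. of_real (P $$ (i,j)) * b j))
      = (\<Sum>i<n. \<Sum>j<n. of_real (\<pi> i * P $$ (i,j)) * a i * b j)"
    by (simp add: sum_distrib_left mult_ac)
  also have "\<dots> = (\<Sum>i<n. \<Sum>j<n. of_real (\<pi> j * P $$ (j,i)) * a i * b j)"
    using assms unfolding reversible_def by (intro sum.cong refl) auto
  also have "\<dots> = (\<Sum>j<n. \<Sum>i<n. of_real (\<pi> j * P $$ (j,i)) * a i * b j)"
    by (rule sum.swap)
  also have "\<dots> = (\<Sum>i<n. of_real (\<pi> i) * b i * (\<Sum>j<n. of_real (P $$ (i,j)) * a j))"
    by (simp add: sum_distrib_left mult_ac)
  finally show ?thesis .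
qed

lemma no_chain:
  fixes x y :: "nat \<Rightarrow> real"
  assumes rev: "reversible n P \<pi>" and pos: "\<forall>i<n. \<pi> i > 0"
    and fx: "fixedv n P x" and nz: "i0 < n" "x i0 \<noteq> 0"
    and ch: "\<forall>i<n. (\<Sum>j<n. P $$ (i,j) * y j) = y i + c * x i"
  shows "c = 0"
proof -
  have id: "(\<Sum>i<n. \<pi> i * x i * (\<Sum>j<n. P $$ (i,j) * y j))
       = (\<Sum>i<n. \<pi> i * y i * (\<Sum>j<n. P $$ (i,j) * x j))"
    using rev_identity[OF rev, of x y] by simp
  have l: "(\<Sum>i<n. \<pi> i * x i * (\<Sum>j<n. P $$ (i,j) * y j))
     = (\<Sum>i<n. \<pi> i * x i * y i) + c * (\<Sum>i<n. \<pi> i * x i * x i)"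
    using ch by (simp add: algebra_simps sum.distrib sum_distrib_left)
  have r: "(\<Sum>i<n. \<pi> i * y i * (\<Sum>j<n. P $$ (i,j) * x j)) = (\<Sum>i<n. \<pi> i * x i * y i)"
    using fx unfolding fixedv_def by (intro sum.cong refl) (simp add: mult_ac)
  have pp: "(\<Sum>i<n. \<pi> i * x i * x i) > 0"
  proof (rule sum_pos2[of "{..<n}" i0])
    show "0 < \<pi> i0 * x i0 * x i0" using pos nz by (metis mult.assoc mult_pos_pos not_real_square_gt_zero)
    show "\<And>i. i \<in> {..<n} \<Longrightarrow> 0 \<le> \<pi> i * x i * x i" using pos
      by (metis lessThan_iff less_eq_real_def mult.assoc mult_nonneg_nonneg zero_le_square)
  qed (use nz in auto)
  from id l r have "c * (\<Sum>i<n. \<pi> i * x i * x i) = 0" by simp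
  with pp show ?thesis by simp
qed

lemma stoch_fixed_one: "row_stochastic n P \<Longrightarrow> fixedv n P (\<lambda>_. 1)"
  unfolding row_stochastic_def fixedv_def by simp

lemma fixed_const:
  assumes st: "row_stochastic n P" and pr: "primitive_mat n P" and fx: "fixedv n P f" and n: "n > 0"
  shows "\<forall>i<n. \<forall>j<n. f i = f j"
proof -
  from pr obtain k where k: "k > 0" "\<forall>i<n. \<forall>j<n. (P ^\<^sub>m k) $$ (i,j) > 0"
    unfolding primitive_mat_def by auto
  have P: "P \<in> carrier_mat n n" using st unfolding row_stochastic_def by auto
  show ?thesis
    by (rule max_principle[OF k(2) fixedv_pow[OF P stoch_fixed_one[OF st]] fixedv_pow[OF P fx] n])
qed

lemma real_eig_le1:
  fixes v :: "real vec"
  assumes st: "row_stochastic n P" and ev: "eigenvector P v r"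
  shows "\<bar>r\<bar> \<le> 1"
proof -
  have P: "P \<in> carrier_mat n n" using st unfolding row_stochastic_def by auto
  from ev P have v: "v \<in> carrier_vec n" "v \<noteq> 0\<^sub>v n" "P *\<^sub>v v = r \<cdot>\<^sub>v v"
    unfolding eigenvector_def by auto
  then obtain i1 where i1: "i1 < n" "v $ i1 \<noteq> 0" by force
  define m where "m = Max ((\<lambda>j. \<bar>v $ j\<bar>) ` {..<n})"
  have "m \<in> (\<lambda>j. \<bar>v $ j\<bar>) ` {..<n}" unfolding m_def using i1 by (intro Max_in) auto
  then obtain i0 where i0: "i0 < n" "\<bar>v $ i0\<bar> = m" by auto
  have le: "\<forall>j<n. \<bar>v $ j\<bar> \<le> m" unfolding m_def by auto
  have mpos: "m > 0" using le i1 by (metis order_less_le_trans zero_less_abs_iff)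
  have "r * v $ i0 = (\<Sum>j<n. P $$ (i0,j) * v $ j)"
    using arg_cong[OF v(3), of "\<lambda>w. w $ i0"] mult_vec_entry[OF P v(1) i0(1)] i0 v by simp
  then have "\<bar>r\<bar> * m = \<bar>\<Sum>j<n. P $$ (i0,j) * v $ j\<bar>" using i0 by (metis abs_mult)
  also have "\<dots> \<le> (\<Sum>j<n. \<bar>P $$ (i0,j) * v $ j\<bar>)" by (rule sum_abs)
  also have "\<dots> \<le> (\<Sum>j<n. P $$ (i0,j) * m)"
  proof (rule sum_mono)
    fix j assume j: "j \<in> {..<n}"
    have "P $$ (i0,j) \<ge> 0" using st i0 j unfolding row_stochastic_def by auto
    then show "\<bar>P $$ (i0,j) * v $ j\<bar> \<le> P $$ (i0,j) * m"
      using le j by (simp add: abs_mult mult_left_mono)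
  qed
  also have "\<dots> = m" using st i0 unfolding row_stochastic_def by (simp add: sum_distrib_right[symmetric])
  finally show ?thesis using mpos by simp
qed

lemma complex_eig_real:
  fixes v :: "complex vec"
  assumes P: "P \<in> carrier_mat n n" and rev: "reversible n P \<pi>" and pos: "\<forall>i<n. \<pi> i > 0"
    and ev: "eigenvector (map_mat complex_of_real P) v z"
  shows "Im z = 0"
proof -
  let ?Pc = "map_mat complex_of_real P"
  have Pc: "?Pc \<in> carrier_mat n n" using P by simp
  from ev P have v: "v \<in> carrier_vec n" "v \<noteq> 0\<^sub>v n" "?Pc *\<^sub>v v = z \<cdot>\<^sub>v v"
    unfolding eigenvector_def by auto
  then obtain i1 where i1: "i1 < n" "v $ i1 \<noteq> 0" by force
  have ent: "\<And>i. i < n \<Longrightarrow> (\<Sum>j<n. of_real (P $$ (i,j)) * v $ j) = z * v $ i"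
  proof -
    fix i assume i: "i < n"
    show "(\<Sum>j<n. of_real (P $$ (i,j)) * v $ j) = z * v $ i"
      using arg_cong[OF v(3), of "\<lambda>w. w $ i"] mult_vec_entry[OF Pc v(1) i] i v P by simp
  qed
  define s where "s = (\<Sum>i<n. complex_of_real (\<pi> i) * cnj (v $ i) * (\<Sum>j<n. of_real (P $$ (i,j)) * v $ j))"
  have "s = (\<Sum>i<n. complex_of_real (\<pi> i) * v $ i * (\<Sum>j<n. of_real (P $$ (i,j)) * cnj (v $ j)))"
    unfolding s_def by (rule rev_identity[OF rev])
  also have "\<dots> = cnj s" unfolding s_def by (simp add: mult_ac)
  finally have sr: "s = cnj s" .
  define N where "N = (\<Sum>i<n. \<pi> i * (cmod (v $ i))^2)"
  have s2: "s = z * of_real N"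
  proof -
    have "s = (\<Sum>i<n. z * (complex_of_real (\<pi> i) * (cnj (v $ i) * v $ i)))"
      unfolding s_def using ent by (intro sum.cong refl) (simp add: mult_ac)
    also have "\<dots> = (\<Sum>i<n. z * (complex_of_real (\<pi> i * (cmod (v $ i))^2)))"
      by (intro sum.cong refl) (simp add: complex_norm_square[symmetric] mult.commute)
    also have "\<dots> = z * of_real N" unfolding N_def
      by (simp add: sum_distrib_left)
    finally show ?thesis .
  qed
  have Npos: "N > 0" unfolding N_def
  proof (rule sum_pos2[of "{..<n}" i1])
    show "0 < \<pi> i1 * (cmod (v $ i1))^2" using pos i1 by simp
    show "\<And>i. i \<in> {..<n} \<Longrightarrow> 0 \<le> \<pi> i * (cmod (v $ i))^2" using pos
      by (simp add: less_imp_le)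
  qed (use i1 in auto)
  have "Im s = 0" using arg_cong[OF sr, of Im] by simp
  then show ?thesis using s2 Npos by simp
qed



lemma char_poly_real:
  assumes P: "P \<in> carrier_mat n n" and rev: "reversible n P \<pi>" and pos: "\<forall>i<n. \<pi> i > 0"
  shows "\<exists>rs. char_poly P = (\<Prod>r\<leftarrow>rs. [:-r,1:]) \<and> length rs = n"
proof -
  interpret mp: map_poly_inj_idom_divide_hom "of_real :: real \<Rightarrow> complex" ..
  let ?Pc = "map_mat complex_of_real P"
  have Pc: "?Pc \<in> carrier_mat n n" using P by simp
  obtain as where as: "char_poly ?Pc = (\<Prod>a\<leftarrow>as. [:-a,1:])" "length as = n"
    using char_poly_factorized[OF Pc] by auto
  have re: "\<forall>a\<in>set as. Im a = 0"
  proof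
    fix a assume a: "a \<in> set as"
    have "poly (char_poly ?Pc) a = 0" unfolding as(1) using a by (rule linear_poly_root)
    then have "eigenvalue ?Pc a" using eigenvalue_root_char_poly[OF Pc] by simp
    then obtain v where "eigenvector ?Pc v a" unfolding eigenvalue_def by auto
    then show "Im a = 0" using complex_eig_real[OF P rev pos] by blast
  qed
  define rs where "rs = map Re as"
  have "map_poly of_real (char_poly P) = char_poly ?Pc"
    by (rule of_real_hom.char_poly_hom[OF P, symmetric])
  also have "\<dots> = (\<Prod>r\<leftarrow>rs. [:- complex_of_real r,1:])"
    unfolding as(1) rs_def map_map o_def using re
    by (intro arg_cong[where f=prod_list] map_cong refl) (simp add: complex_eq_iff)
  also have "\<dots> = map_poly of_real (\<Prod>r\<leftarrow>rs. [:-r,1:])"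
    by (simp add: mp.hom_prod_list o_def)
  finally have "char_poly P = (\<Prod>r\<leftarrow>rs. [:-r,1:])" by (rule mp.injectivity)
  moreover have "length rs = n" using as(2) unfolding rs_def by simp
  ultimately show ?thesis by blast
qed

lemma spec_char:
  assumes P: "P \<in> carrier_mat n n" and cp: "char_poly P = (\<Prod>r\<leftarrow>rs. [:-r,1:])"
  shows "spec P = complex_of_real ` set rs"
proof -
  interpret mp: map_poly_inj_idom_divide_hom "of_real :: real \<Rightarrow> complex" ..
  let ?Pc = "map_mat complex_of_real P"
  have Pc: "?Pc \<in> carrier_mat n n" using P by simp
  have h: "char_poly ?Pc = map_poly complex_of_real (char_poly P)"
    by (rule of_real_hom.char_poly_hom[OF P])
  have cpc: "char_poly ?Pc = (\<Prod>r\<leftarrow>rs. [:- complex_of_real r,1:])"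
    unfolding h cp by (simp add: mp.hom_prod_list o_def)
  show ?thesis
    unfolding spec_def eigenvalue_root_char_poly[OF Pc] cpc poly_prod_list_zero_iff
    by auto
qed

lemma eig_set_le1:
  assumes st: "row_stochastic n P" and cp: "char_poly P = (\<Prod>r\<leftarrow>rs. [:-r,1:])" and r: "r \<in> set rs"
  shows "\<bar>r\<bar> \<le> 1"
proof -
  have P: "P \<in> carrier_mat n n" using st unfolding row_stochastic_def by auto
  have "poly (char_poly P) r = 0" unfolding cp using r by (rule linear_poly_root)
  then have "eigenvalue P r" using eigenvalue_root_char_poly[OF P] by simp
  then obtain v where "eigenvector P v r" unfolding eigenvalue_def by auto
  then show ?thesis using real_eig_le1[OF st] by blast
qed

lemma one_in_set:
  assumes st: "row_stochastic n P" and cp: "char_poly P = (\<Prod>r\<leftarrow>rs. [:-r,1:])" and n: "n > 0"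
  shows "1 \<in> set rs"
proof -
  have P: "P \<in> carrier_mat n n" using st unfolding row_stochastic_def by auto
  let ?v = "vec n (\<lambda>_. 1::real)"
  have "P *\<^sub>v ?v = 1 \<cdot>\<^sub>v ?v"
  proof (rule eq_vecI)
    fix i assume i: "i < dim_vec (1 \<cdot>\<^sub>v ?v)"
    then have i': "i < n" by simp
    show "(P *\<^sub>v ?v) $ i = (1 \<cdot>\<^sub>v ?v) $ i"
      using mult_vec_entry[OF P _ i', of ?v] st i' unfolding row_stochastic_def by simp
  qed (use P in simp)
  moreover have "?v \<noteq> 0\<^sub>v n" using n by (metis index_vec index_zero_vec(1) zero_neq_one)
  ultimately have "eigenvector P ?v 1" unfolding eigenvector_def using P by auto
  then have "eigenvalue P 1" unfolding eigenvalue_def by auto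
  then have "poly (char_poly P) 1 = 0" using eigenvalue_root_char_poly[OF P] by simp
  then show ?thesis unfolding cp poly_prod_list_zero_iff by auto
qed



lemma ut_pow:
  fixes T :: "'a::comm_ring_1 mat"
  assumes T: "T \<in> carrier_mat n n" and ut: "upper_triangular T"
  shows "upper_triangular (T ^\<^sub>m k) \<and> (\<forall>i<n. (T ^\<^sub>m k) $$ (i,i) = T $$ (i,i) ^ k)"
proof (induction k)
  case 0 then show ?case using T by auto
next
  case (Suc k)
  let ?K = "T ^\<^sub>m k"
  have K: "?K \<in> carrier_mat n n" using T by simp
  have utK: "upper_triangular ?K" and dK: "\<forall>i<n. ?K $$ (i,i) = T $$ (i,i) ^ k" using Suc by auto
  have low: "(?K * T) $$ (i,j) = 0" if "j < i" "i < n" for i j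
  proof -
    have "(?K * T) $$ (i,j) = (\<Sum>l<n. ?K $$ (i,l) * T $$ (l,j))"
      using mult_entry[OF K T] that by simp
    also have "\<dots> = 0"
    proof (rule sum.neutral, intro ballI)
      fix l assume l: "l \<in> {..<n}"
      show "?K $$ (i,l) * T $$ (l,j) = 0"
      proof (cases "l < i")
        case True then show ?thesis using upper_triangularD[OF utK, of l i] that K T by simp
      next
        case False then show ?thesis using upper_triangularD[OF ut, of j l] that l T by simp
      qed
    qed
    finally show ?thesis .
  qed
  have dg: "(?K * T) $$ (i,i) = T $$ (i,i) ^ Suc k" if "i < n" for i
  proof -
    have "(?K * T) $$ (i,i) = (\<Sum>l<n. ?K $$ (i,l) * T $$ (l,i))"
      using mult_entry[OF K T] that by simp
    also have "\<dots> = ?K $$ (i,i) * T $$ (i,i) + (\<Sum>l\<in>{..<n}-{i}. ?K $$ (i,l) * T $$ (l,i))"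
      using that by (subst sum.remove[of _ i]) auto
    also have "(\<Sum>l\<in>{..<n}-{i}. ?K $$ (i,l) * T $$ (l,i)) = 0"
    proof (rule sum.neutral, intro ballI)
      fix l assume l: "l \<in> {..<n}-{i}"
      show "?K $$ (i,l) * T $$ (l,i) = 0"
      proof (cases "l < i")
        case True then show ?thesis using upper_triangularD[OF utK, of l i] that K T by simp
      next
        case False then have "i < l" using l by auto
        then show ?thesis using upper_triangularD[OF ut, of i l] that l T by simp
      qed
    qed
    finally show ?thesis using dK that by simp
  qed
  have "upper_triangular (?K * T)" using low K T by (intro upper_triangularI) simp
  then show ?case using dg by simp
qed

lemma diag_pow:
  fixes T :: "'a::comm_ring_1 mat"
  assumes T: "T \<in> carrier_mat n n" and ut: "upper_triangular T"
  shows "diag_mat (T ^\<^sub>m k) = map (\<lambda>a. a ^ k) (diag_mat T)"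
  using ut_pow[OF T ut, of k] T by (intro nth_equalityI) (auto simp: diag_mat_def)

lemma char_poly_pow:
  fixes P :: "real mat"
  assumes P: "P \<in> carrier_mat n n" and cp: "char_poly P = (\<Prod>r\<leftarrow>rs. [:-r,1:])"
  shows "\<exists>T. T \<in> carrier_mat n n \<and> upper_triangular T \<and> similar_mat (P ^\<^sub>m k) (T ^\<^sub>m k)
     \<and> diag_mat (T ^\<^sub>m k) = map (\<lambda>r. r ^ k) rs"
proof -
  obtain T W W' where sd: "schur_decomposition P rs = (T,W,W')" by (cases "schur_decomposition P rs") auto
  from schur_decomposition[OF P cp sd] have w: "similar_mat_wit P T W W'" and ut: "upper_triangular T"
    and dg: "diag_mat T = rs" by auto
  have T: "T \<in> carrier_mat n n" using similar_mat_witD2[OF P w] by auto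
  have "similar_mat (P ^\<^sub>m k) (T ^\<^sub>m k)" using similar_mat_wit_pow[OF w] unfolding similar_mat_def by blast
  then show ?thesis using T ut diag_pow[OF T ut, of k] dg by auto
qed



lemma dil_sim:
  fixes Q :: "real mat"
  assumes Q: "Q \<in> carrier_mat n n"
  shows "similar_mat (four_block_mat (0\<^sub>m n n) Q Q (0\<^sub>m n n))
                     (four_block_mat Q (0\<^sub>m n n) (0\<^sub>m n n) ((-1) \<cdot>\<^sub>m Q))"
proof -
  define I where "I = (1\<^sub>m n :: real mat)"
  define R where "R = four_block_mat I I I ((-1) \<cdot>\<^sub>m I)"
  define R' where "R' = four_block_mat ((1/2) \<cdot>\<^sub>m I) ((1/2) \<cdot>\<^sub>m I) ((1/2) \<cdot>\<^sub>m I) ((-1/2) \<cdot>\<^sub>m I)"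
  define Dg where "Dg = four_block_mat Q (0\<^sub>m n n) (0\<^sub>m n n) ((-1) \<cdot>\<^sub>m Q)"
  have I: "I \<in> carrier_mat n n" unfolding I_def by simp
  have c: "R \<in> carrier_mat (n+n) (n+n)" "R' \<in> carrier_mat (n+n) (n+n)" "Dg \<in> carrier_mat (n+n) (n+n)"
    unfolding R_def R'_def Dg_def using I Q by auto
  have mI: "(-1) \<cdot>\<^sub>m I \<in> carrier_mat n n" "(1/2) \<cdot>\<^sub>m I \<in> carrier_mat n n" "(-1/2) \<cdot>\<^sub>m I \<in> carrier_mat n n"
     "(-1) \<cdot>\<^sub>m Q \<in> carrier_mat n n" "0\<^sub>m n n \<in> carrier_mat n n" using I Q by auto
  have RR': "R * R' = 1\<^sub>m (n+n)"
    unfolding R_def R'_def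
    apply (subst mult_four_block_mat[OF I I I mI(1) mI(2) mI(2) mI(2) mI(3)])
    apply (subst four_block_one_mat[symmetric])
    apply (rule cong_four_block_mat)
    apply (rule eq_matI; simp add: I_def)+
    done
  have R'R: "R' * R = 1\<^sub>m (n+n)"
    unfolding R_def R'_def
    apply (subst mult_four_block_mat[OF mI(2) mI(2) mI(2) mI(3) I I I mI(1)])
    apply (subst four_block_one_mat[symmetric])
    apply (rule cong_four_block_mat)
    apply (rule eq_matI; simp add: I_def)+
    done
  have RD: "R * Dg = four_block_mat Q ((-1) \<cdot>\<^sub>m Q) Q Q"
    unfolding R_def Dg_def
    apply (subst mult_four_block_mat[OF I I I mI(1) Q mI(5) mI(5) mI(4)])
    apply (rule cong_four_block_mat)
    using Q apply (auto simp: I_def)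
    done
  have S: "four_block_mat (0\<^sub>m n n) Q Q (0\<^sub>m n n) = R * Dg * R'"
    unfolding RD R'_def
    apply (subst mult_four_block_mat[OF Q mI(4) Q Q mI(2) mI(2) mI(2) mI(3)])
    apply (rule cong_four_block_mat)
    apply (rule eq_matI; use Q in \<open>simp add: I_def\<close>)+
    done
  have "similar_mat_wit (four_block_mat (0\<^sub>m n n) Q Q (0\<^sub>m n n)) Dg R R'"
    by (rule similar_mat_witI[OF RR' R'R S _ c(3) c(1) c(2)]) (use Q in auto)
  then show ?thesis unfolding Dg_def similar_mat_def by blast
qed

lemma dil_char:
  fixes Q T :: "real mat"
  assumes Q: "Q \<in> carrier_mat n n" and T: "T \<in> carrier_mat n n" and sim: "similar_mat Q T"
    and ut: "upper_triangular T"
  shows "char_poly (four_block_mat (0\<^sub>m n n) Q Q (0\<^sub>m n n))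
       = (\<Prod>a\<leftarrow>diag_mat T. [:-a,1:]) * (\<Prod>a\<leftarrow>diag_mat T. [:-(-a),1:])"
proof -
  let ?B = "four_block_mat T (0\<^sub>m n n) (0\<^sub>m n n) ((-1) \<cdot>\<^sub>m T)"
  have s2: "similar_mat (four_block_mat Q (0\<^sub>m n n) (0\<^sub>m n n) ((-1) \<cdot>\<^sub>m Q)) ?B"
    by (rule similar_mat_four_block_0_0[OF sim similar_mat_smult[OF sim] Q]) (use Q in simp)
  have ut2: "upper_triangular ((-1) \<cdot>\<^sub>m T)" using ut T by (intro upper_triangularI) auto
  have utB: "upper_triangular ?B"
    by (rule upper_triangular_four_block[OF T _ ut ut2]) (use T in simp)
  have B: "?B \<in> carrier_mat (n+n) (n+n)" using T by simp
  have "char_poly (four_block_mat (0\<^sub>m n n) Q Q (0\<^sub>m n n)) = char_poly ?B"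
    using char_poly_similar[OF similar_mat_trans[OF dil_sim[OF Q] s2]] .
  also have "\<dots> = (\<Prod>a\<leftarrow>diag_mat ?B. [:-a,1:])" by (rule char_poly_upper_triangular[OF B utB])
  also have "diag_mat ?B = diag_mat T @ diag_mat ((-1) \<cdot>\<^sub>m T)"
    by (rule diag_four_block_mat[OF T, of _ n]) (use T in simp)
  also have "diag_mat ((-1) \<cdot>\<^sub>m T) = map uminus (diag_mat T)"
    using T by (intro nth_equalityI) (auto simp: diag_mat_def)
  finally show ?thesis by (simp add: o_def)
qed

lemma pow_Suc_left:
  fixes P :: "'a::semiring_1 mat"
  assumes P: "P \<in> carrier_mat n n"
  shows "P ^\<^sub>m Suc k = P * P ^\<^sub>m k"
proof (induction k)
  case 0 then show ?case using P by simp
next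
  case (Suc k)
  have "P ^\<^sub>m Suc (Suc k) = (P * P ^\<^sub>m k) * P" using Suc by simp
  also have "\<dots> = P * (P ^\<^sub>m k * P)" using P by (simp add: assoc_mult_mat[of _ n n _ n _ n])
  finally show ?case by simp
qed

lemma rev_pow:
  assumes P: "P \<in> carrier_mat n n" and rev: "reversible n P \<pi>"
  shows "reversible n (P ^\<^sub>m k) \<pi>"
proof (induction k)
  case 0 then show ?case using P unfolding reversible_def by auto
next
  case (Suc k)
  let ?K = "P ^\<^sub>m k"
  have K: "?K \<in> carrier_mat n n" using P by simp
  show ?case unfolding reversible_def
  proof (intro allI impI)
    fix i j assume i: "i < n" and j: "j < n"
    have "\<pi> i * (P ^\<^sub>m Suc k) $$ (i,j) = (\<Sum>l<n. (\<pi> i * ?K $$ (i,l)) * P $$ (l,j))"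
      using mult_entry[OF K P i j] by (simp add: sum_distrib_left mult.assoc)
    also have "\<dots> = (\<Sum>l<n. ?K $$ (l,i) * (\<pi> l * P $$ (l,j)))"
      using Suc i unfolding reversible_def by (intro sum.cong refl) (simp add: mult_ac)
    also have "\<dots> = (\<Sum>l<n. ?K $$ (l,i) * (\<pi> j * P $$ (j,l)))"
      using rev j unfolding reversible_def by (intro sum.cong refl) simp
    also have "\<dots> = \<pi> j * (P * ?K) $$ (j,i)"
      using mult_entry[OF P K j i] by (simp add: sum_distrib_left mult_ac)
    also have "P * ?K = P ^\<^sub>m Suc k" using pow_Suc_left[OF P] by simp
    finally show "\<pi> i * (P ^\<^sub>m Suc k) $$ (i,j) = \<pi> j * (P ^\<^sub>m Suc k) $$ (j,i)" .
  qed
qed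

lemma time_rev_id:
  assumes Q: "Q \<in> carrier_mat n n" and rev: "reversible n Q \<pi>" and pos: "\<forall>i<n. \<pi> i > 0"
  shows "time_reversal n \<pi> Q = Q"
proof (rule eq_matI)
  fix i j assume i: "i < dim_row Q" and j: "j < dim_col Q"
  then have "\<pi> j * Q $$ (j,i) = \<pi> i * Q $$ (i,j)" using rev Q unfolding reversible_def by auto
  then show "time_reversal n \<pi> Q $$ (i,j) = Q $$ (i,j)"
    using i j Q pos unfolding time_reversal_def by auto
qed (use Q in \<open>auto simp: time_reversal_def\<close>)



lemma prod_list_mset_eq:
  assumes "mset xs = mset ys"
  shows "prod_list (map (f :: _ \<Rightarrow> _ :: comm_monoid_mult) xs) = prod_list (map f ys)"
proof -
  have "prod_list (map f xs) = prod_mset (mset (map f xs))" by (rule prod_mset_prod_list[symmetric])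
  also have "\<dots> = prod_mset (mset (map f ys))" using assms by simp
  also have "\<dots> = prod_list (map f ys)" by (rule prod_mset_prod_list)
  finally show ?thesis .
qed

lemma simple_one:
  assumes st: "row_stochastic n P" and pr: "primitive_mat n P" and rev: "reversible n P \<pi>"
    and pos: "\<forall>i<n. \<pi> i > 0" and cp: "char_poly P = (\<Prod>r\<leftarrow>rs. [:-r,1:])" and len: "length rs = n"
  shows "count (mset rs) 1 \<le> 1"
proof (rule ccontr)
  assume "\<not> count (mset rs) 1 \<le> 1"
  then have c2: "count (mset rs) 1 \<ge> 2" by simp
  have P: "P \<in> carrier_mat n n" using st unfolding row_stochastic_def by auto
  define es where "es = 1 # 1 # remove1 1 (remove1 1 rs)"
  have "0 < count (mset rs) 1" using c2 by linarith
  then have m1: "1 \<in> set rs" by simp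
  have "count (mset (remove1 1 rs)) 1 = count (mset rs) 1 - 1" by (simp add: mset_remove1)
  then have "0 < count (mset (remove1 1 rs)) 1" using c2 by linarith
  then have m2: "1 \<in> set (remove1 1 rs)" by (metis count_mset_0_iff less_irrefl)
  have a1: "add_mset 1 (mset (remove1 1 (remove1 1 rs))) = mset (remove1 1 rs)"
    using m2 by (metis insert_DiffM mset_remove1 set_mset_mset)
  have a2: "add_mset 1 (mset (remove1 1 rs)) = mset rs"
    using m1 by (metis insert_DiffM mset_remove1 set_mset_mset)
  have mes: "mset es = mset rs" unfolding es_def using a1 a2 by simp
  have "length es = n" using mes len by (metis size_mset)
  then have n2: "n \<ge> 2" unfolding es_def by auto
  have cpe: "char_poly P = (\<Prod>e\<leftarrow>es. [:-e,1:])" unfolding cp by (rule prod_list_mset_eq[OF mes[symmetric]])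
  obtain T W W' where sd: "schur_decomposition P es = (T,W,W')" by (cases "schur_decomposition P es") auto
  from schur_decomposition[OF P cpe sd] have w: "similar_mat_wit P T W W'" and ut: "upper_triangular T"
    and dg: "diag_mat T = es" by auto
  from similar_mat_witD2[OF P w] have T: "T \<in> carrier_mat n n" and W: "W \<in> carrier_mat n n"
    and W': "W' \<in> carrier_mat n n" and WW': "W' * W = 1\<^sub>m n" and Peq: "P = W * T * W'" by auto
  have T00: "T $$ (0,0) = 1" using arg_cong[OF dg, of "\<lambda>l. l ! 0"] T n2 unfolding es_def diag_mat_def by simp
  have T11: "T $$ (1,1) = 1" using arg_cong[OF dg, of "\<lambda>l. l ! 1"] T n2 unfolding es_def diag_mat_def by simp
  have PW: "P * W = W * T"
  proof -
    have "P * W = W * T * (W' * W)" unfolding Peq using W T W' by (simp add: assoc_mult_mat[of _ n n _ n _ n])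
    also have "\<dots> = W * T" unfolding WW' using W T by simp
    finally show ?thesis .
  qed
  define x where "x = (\<lambda>i. W $$ (i,0))"
  define y where "y = (\<lambda>i. W $$ (i,1))"
  have PWe: "(\<Sum>j<n. P $$ (i,j) * W $$ (j,c)) = (\<Sum>l<n. W $$ (i,l) * T $$ (l,c))" if "i < n" "c < n" for i c
    using arg_cong[OF PW, of "\<lambda>M. M $$ (i,c)"] mult_entry[OF P W that] mult_entry[OF W T that] by simp
  have two: "(\<Sum>l<n. f l) = f 0 + f 1" if "\<forall>l. l \<ge> 2 \<and> l < n \<longrightarrow> f l = 0" for f :: "nat \<Rightarrow> real"
  proof -
    have "(\<Sum>l<n. f l) = (\<Sum>l\<in>{0,1}. f l)"
      by (rule sum.mono_neutral_left[of "{..<n}" "{0,1}" f, symmetric]) (use that n2 in auto)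
    then show ?thesis by simp
  qed
  have low: "T $$ (l,c) = 0" if "c < l" "l < n" for l c using upper_triangularD[OF ut that(1)] that T by simp
  have fx: "fixedv n P x" unfolding fixedv_def
  proof (intro allI impI)
    fix i assume i: "i < n"
    have "(\<Sum>l<n. W $$ (i,l) * T $$ (l,0)) = W $$ (i,0) * T $$ (0,0) + W $$ (i,1) * T $$ (1,0)"
      by (rule two) (use low n2 in auto)
    then show "(\<Sum>j<n. P $$ (i,j) * x j) = x i" using PWe[OF i, of 0] n2 low[of 0 1] T00 unfolding x_def by simp
  qed
  have n0: "n > 0" using n2 by simp
  have xc: "\<forall>i<n. x i = x 0" using fixed_const[OF st pr fx n0] n0 by blast
  have e00: "(\<Sum>l<n. W' $$ (0,l) * W $$ (l,0)) = 1"
    using arg_cong[OF WW', of "\<lambda>M. M $$ (0,0)"] mult_entry[OF W' W n0 n0] n0 by simp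
  moreover have "(\<Sum>l<n. W' $$ (0,l) * W $$ (l,0)) = (\<Sum>l<n. x 0 * W' $$ (0,l))"
  proof (rule sum.cong[OF refl])
    fix l assume "l \<in> {..<n}"
    then have "W $$ (l,0) = x 0" using xc unfolding x_def by blast
    then show "W' $$ (0,l) * W $$ (l,0) = x 0 * W' $$ (0,l)" by simp
  qed
  ultimately have "x 0 * (\<Sum>l<n. W' $$ (0,l)) = 1" by (simp add: sum_distrib_left)
  then have x0: "x 0 \<noteq> 0" and s0: "(\<Sum>l<n. W' $$ (0,l)) \<noteq> 0" by auto
  have ch: "\<forall>i<n. (\<Sum>j<n. P $$ (i,j) * y j) = y i + T $$ (0,1) * x i"
  proof (intro allI impI)
    fix i assume i: "i < n"
    have "(\<Sum>l<n. W $$ (i,l) * T $$ (l,1)) = W $$ (i,0) * T $$ (0,1) + W $$ (i,1) * T $$ (1,1)"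
      by (rule two) (use low n2 in auto)
    then show "(\<Sum>j<n. P $$ (i,j) * y j) = y i + T $$ (0,1) * x i"
      using PWe[OF i, of 1] n2 T11 unfolding x_def y_def by (simp add: mult.commute)
  qed
  have "T $$ (0,1) = 0" by (rule no_chain[OF rev pos fx n0 x0 ch])
  then have fy: "fixedv n P y" using ch unfolding fixedv_def by simp
  have yc: "\<forall>i<n. y i = y 0" using fixed_const[OF st pr fy n0] n0 by blast
  have n1: "1 < n" using n2 by simp
  have "(\<Sum>l<n. W' $$ (0,l) * W $$ (l,1)) = 0"
    using arg_cong[OF WW', of "\<lambda>M. M $$ (0,1)"] mult_entry[OF W' W n0 n1] n1 by simp
  moreover have "(\<Sum>l<n. W' $$ (0,l) * W $$ (l,1)) = (\<Sum>l<n. y 0 * W' $$ (0,l))"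
  proof (rule sum.cong[OF refl])
    fix l assume "l \<in> {..<n}"
    then have "W $$ (l,1) = y 0" using yc unfolding y_def by blast
    then show "W' $$ (0,l) * W $$ (l,1) = y 0 * W' $$ (0,l)" by simp
  qed
  ultimately have "y 0 * (\<Sum>l<n. W' $$ (0,l)) = 0" by (simp add: sum_distrib_left)
  then have y0: "y 0 = 0" using s0 by simp
  have "(\<Sum>l<n. W' $$ (1,l) * W $$ (l,1)) = 1"
    using arg_cong[OF WW', of "\<lambda>M. M $$ (1,1)"] mult_entry[OF W' W n1 n1] n1 by simp
  moreover have "(\<Sum>l<n. W' $$ (1,l) * W $$ (l,1)) = 0"
  proof (rule sum.neutral, intro ballI)
    fix l assume "l \<in> {..<n}"
    then have "y l = y 0" using yc by blast
    then have "W $$ (l,1) = 0" using y0 unfolding y_def by simp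
    then show "W' $$ (1,l) * W $$ (l,1) = 0" by simp
  qed
  ultimately show False by simp
qed



lemma second_largest:
  fixes R :: "real multiset"
  assumes ne: "R \<noteq> {#}" and le: "\<forall>x\<in>#R. x \<le> a"
  shows "rev (sorted_list_of_multiset (add_mset a R)) ! 1 = Max (set_mset R)"
proof -
  define xs where "xs = sorted_list_of_multiset R"
  have s: "sorted xs" and sx: "set xs = set_mset R" unfolding xs_def by auto
  have xne: "xs \<noteq> []" using ne sx by auto
  have "sorted_list_of_multiset (add_mset a R) = xs @ [a]"
    unfolding sorted_list_of_multiset_insert xs_def[symmetric]
    by (rule sorted_insort_is_snoc[OF s]) (use le sx in auto)
  then have "rev (sorted_list_of_multiset (add_mset a R)) ! 1 = last xs"
    using xne by (simp add: last_conv_nth rev_nth nth_append)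
  also have "last xs = Max (set xs)"
  proof (rule Max_eqI[symmetric])
    show "last xs \<in> set xs" using xne by simp
    fix y assume "y \<in> set xs"
    then obtain i where i: "i < length xs" "y = xs ! i" by (auto simp: in_set_conv_nth)
    then show "y \<le> last xs" using s xne
      by (simp add: last_conv_nth sorted_iff_nth_mono)
  qed simp
  finally show ?thesis using sx by simp
qed

lemma proots_lin:
  fixes f :: "'a \<Rightarrow> real"
  shows "proots (\<Prod>a\<leftarrow>xs. [:-(f a),1:]) = mset (map f xs)"
proof (induction xs)
  case Nil then show ?case by simp
next
  case (Cons x xs)
  have nz: "(\<Prod>a\<leftarrow>xs. [:-(f a),1:]) \<noteq> 0" by (auto simp: prod_list_zero_iff)
  have "proots (\<Prod>a\<leftarrow>x#xs. [:-(f a),1:]) = proots [:-(f x),1:] + proots (\<Prod>a\<leftarrow>xs. [:-(f a),1:])"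
  proof -
    have e: "(\<Prod>a\<leftarrow>x#xs. [:-(f a),1:]) = [:-(f x),1:] * (\<Prod>a\<leftarrow>xs. [:-(f a),1:])" by simp
    have nz1: "[:-(f x),1:] \<noteq> (0::real poly)" by simp
    show ?thesis unfolding e by (rule proots_mult[OF nz1 nz])
  qed
  then show ?case using Cons by simp
qed

lemma sup_bound:
  fixes r :: real
  assumes r0: "0 \<le> r" and r1: "r \<le> 1"
  shows "(SUP k\<in>{1..}. (1 - r ^ k) / real k) = 1 - r"
proof -
  have "Sup ((\<lambda>k. (1 - r ^ k) / real k) ` {1..}) = 1 - r"
  proof (rule cSup_eq_maximum)
    show "1 - r \<in> (\<lambda>k. (1 - r ^ k) / real k) ` {1..}" by (rule image_eqI[of _ _ 1]) auto
    fix y assume "y \<in> (\<lambda>k. (1 - r ^ k) / real k) ` {1..}"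
    then obtain k where k: "k \<ge> 1" "y = (1 - r ^ k) / real k" by auto
    have "1 + real k * (r - 1) \<le> (1 + (r - 1)) ^ k"
      by (rule Bernoulli_inequality) (use r0 in simp)
    then have "1 - r ^ k \<le> real k * (1 - r)" by (simp add: algebra_simps)
    then show "y \<le> 1 - r" using k by (simp add: divide_le_eq mult.commute)
  qed
  then show ?thesis by simp
qed



theorem mainTheorem15:
  fixes n :: nat and P :: "real mat" and \<pi> :: "nat \<Rightarrow> real"
  assumes "n \<ge> 2"
    and "row_stochastic n P"
    and "primitive_mat n P"
    and "stationary_dist n P \<pi>"
    and "\<forall>i<n. \<pi> i > 0"
    and "reversible n P \<pi>"
  shows "gamma_dps n \<pi> P = abs_spectral_gap P"
proof -
  note n2 = assms(1) and st = assms(2) and pr = assms(3) and pos = assms(5) and rev = assms(6)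
  have P: "P \<in> carrier_mat n n" using st unfolding row_stochastic_def by auto
  obtain rs where cp: "char_poly P = (\<Prod>r\<leftarrow>rs. [:-r,1:])" and len: "length rs = n"
    using char_poly_real[OF P rev pos] by blast
  have c1: "count (mset rs) 1 \<le> 1" by (rule simple_one[OF st pr rev pos cp len])
  have one: "1 \<in> set rs" by (rule one_in_set[OF st cp]) (use n2 in simp)
  define M where "M = mset rs - {#1#}"
  have mrs: "mset rs = add_mset 1 M" unfolding M_def using one by (simp add: insert_DiffM)
  have "count M 1 = 0" unfolding M_def using c1 by simp
  then have n1M: "1 \<notin># M" by (simp add: count_eq_zero_iff)
  have "size (mset rs) = n" using len by simp
  then have "size M = n - 1" using mrs by simp
  then have Mne: "M \<noteq> {#}" using n2 by auto
  have srs: "set rs = insert 1 (set_mset M)" using arg_cong[OF mrs, of set_mset] by simp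
  have bnd: "\<forall>x\<in>#M. \<bar>x\<bar> \<le> 1" using eig_set_le1[OF st cp] srs by auto
  define r where "r = Max (abs ` set_mset M)"
  have fin: "finite (abs ` set_mset M)" by simp
  have ne: "abs ` set_mset M \<noteq> {}" using Mne by simp
  have absle: "\<forall>x\<in>#M. \<bar>x\<bar> \<le> r" unfolding r_def using fin by auto
  have "r \<in> abs ` set_mset M" unfolding r_def by (rule Max_in[OF fin ne])
  then obtain m0 where m0: "m0 \<in># M" "\<bar>m0\<bar> = r" by auto
  have r0: "0 \<le> r" using m0 by auto
  have r1: "r \<le> 1" using m0 bnd by auto
  have spec: "spec P = complex_of_real ` set rs" by (rule spec_char[OF P cp])
  have setq: "{cmod z |z. z \<in> spec P \<and> z \<noteq> 1} = abs ` set_mset M"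
  proof
    show "{cmod z |z. z \<in> spec P \<and> z \<noteq> 1} \<subseteq> abs ` set_mset M"
    proof
      fix w assume "w \<in> {cmod z |z. z \<in> spec P \<and> z \<noteq> 1}"
      then obtain z where z: "z \<in> spec P" "z \<noteq> 1" "w = cmod z" by auto
      then obtain x where x0: "x \<in> set rs" "z = complex_of_real x" unfolding spec by auto
      have x: "x \<in> set rs" "x \<noteq> 1" "w = \<bar>x\<bar>" using x0 z by auto
      then have "x \<in># M" using srs by auto
      then show "w \<in> abs ` set_mset M" using x by auto
    qed
    show "abs ` set_mset M \<subseteq> {cmod z |z. z \<in> spec P \<and> z \<noteq> 1}"
    proof
      fix w assume "w \<in> abs ` set_mset M"
      then obtain x where x: "x \<in># M" "w = \<bar>x\<bar>" by auto
      then have "x \<noteq> 1" using n1M by auto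
      then have "complex_of_real x \<noteq> 1" by simp
      moreover have "complex_of_real x \<in> spec P" unfolding spec using x srs by auto
      ultimately show "w \<in> {cmod z |z. z \<in> spec P \<and> z \<noteq> 1}" using x by force
    qed
  qed
  have gap: "abs_spectral_gap P = 1 - r" unfolding abs_spectral_gap_def setq r_def ..
  have dd: "gamma_ddagger n \<pi> (P ^\<^sub>m k) = 1 - r ^ k" if k: "k \<ge> 1" for k
  proof -
    define Q where "Q = P ^\<^sub>m k"
    have Qc: "Q \<in> carrier_mat n n" unfolding Q_def using P by simp
    obtain T where T: "T \<in> carrier_mat n n" "upper_triangular T" "similar_mat Q (T ^\<^sub>m k)"
      "diag_mat (T ^\<^sub>m k) = map (\<lambda>r. r ^ k) rs"
      using char_poly_pow[OF P cp, of k] unfolding Q_def by blast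
    have TK: "T ^\<^sub>m k \<in> carrier_mat n n" using T by simp
    have utK: "upper_triangular (T ^\<^sub>m k)" using ut_pow[OF T(1,2)] by blast
    have revQ: "reversible n Q \<pi>" unfolding Q_def by (rule rev_pow[OF P rev])
    have dil: "dilation n \<pi> Q = four_block_mat (0\<^sub>m n n) Q Q (0\<^sub>m n n)"
      unfolding dilation_def time_rev_id[OF Qc revQ pos] ..
    have "char_poly (dilation n \<pi> Q)
       = (\<Prod>a\<leftarrow>map (\<lambda>r. r ^ k) rs. [:-a,1:]) * (\<Prod>a\<leftarrow>map (\<lambda>r. r ^ k) rs. [:-(-a),1:])"
      unfolding dil dil_char[OF Qc TK T(3) utK] T(4) ..
    also have "\<dots> = (\<Prod>a\<leftarrow>rs. [:-(a ^ k),1:]) * (\<Prod>a\<leftarrow>rs. [:-(-(a ^ k)),1:])"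
      by (simp add: o_def)
    finally have cpd: "char_poly (dilation n \<pi> Q) = (\<Prod>a\<leftarrow>rs. [:-(a ^ k),1:]) * (\<Prod>a\<leftarrow>rs. [:-(-(a ^ k)),1:])" .
    have nz1: "(\<Prod>a\<leftarrow>rs. [:-(a ^ k),1:]) \<noteq> (0 :: real poly)" by (auto simp: prod_list_zero_iff)
    have nz2: "(\<Prod>a\<leftarrow>rs. [:-(-(a ^ k)),1:]) \<noteq> (0 :: real poly)" by (auto simp: prod_list_zero_iff)
    define R where "R = add_mset (-1) (image_mset (\<lambda>a. a ^ k) M + image_mset (\<lambda>a. -(a ^ k)) M)"
    have pr_eq: "proots (char_poly (dilation n \<pi> Q)) = add_mset 1 R"
    proof -
      have "proots (char_poly (dilation n \<pi> Q)) = mset (map (\<lambda>a. a ^ k) rs) + mset (map (\<lambda>a. -(a ^ k)) rs)"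
        unfolding cpd proots_mult[OF nz1 nz2] proots_lin[of "\<lambda>a. a ^ k"] proots_lin[of "\<lambda>a. -(a ^ k)"] ..
      also have "\<dots> = image_mset (\<lambda>a. a ^ k) (add_mset 1 M) + image_mset (\<lambda>a. -(a ^ k)) (add_mset 1 M)"
        unfolding mset_map mrs ..
      also have "\<dots> = add_mset 1 R" unfolding R_def by simp
      finally show ?thesis .
    qed
    have Rle: "\<forall>x\<in>#R. x \<le> 1"
    proof
      fix x assume "x \<in># R"
      then consider "x = -1" | a where "a \<in># M" "x = a ^ k" | a where "a \<in># M" "x = -(a ^ k)"
        unfolding R_def by auto
      then show "x \<le> 1"
      proof cases
        case 1 then show ?thesis by simp
      next
        case (2 a)
        have "\<bar>a\<bar> ^ k \<le> 1" using bnd 2 by (simp add: power_le_one)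
        then show ?thesis using 2 by (metis abs_ge_self power_abs order_trans)
      next
        case (3 a)
        have "\<bar>a\<bar> ^ k \<le> 1" using bnd 3 by (simp add: power_le_one)
        then show ?thesis using 3 by (metis abs_ge_minus_self power_abs order_trans)
      qed
    qed
    have Rne: "R \<noteq> {#}" unfolding R_def by simp
    have maxR: "Max (set_mset R) = r ^ k"
    proof (rule Max_eqI)
      show "finite (set_mset R)" by simp
      fix x assume "x \<in> set_mset R"
      then consider "x = -1" | a where "a \<in># M" "x = a ^ k" | a where "a \<in># M" "x = -(a ^ k)"
        unfolding R_def by auto
      then show "x \<le> r ^ k"
      proof cases
        case 1 then show ?thesis using r0 by (simp add: order_trans[OF _ zero_le_power])
      next
        case (2 a)
        have "\<bar>a\<bar> ^ k \<le> r ^ k" using absle 2 by (simp add: power_mono)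
        then show ?thesis using 2 by (metis abs_ge_self power_abs order_trans)
      next
        case (3 a)
        have "\<bar>a\<bar> ^ k \<le> r ^ k" using absle 3 by (simp add: power_mono)
        then show ?thesis using 3 by (metis abs_ge_minus_self power_abs order_trans)
      qed
    next
      show "r ^ k \<in> set_mset R"
      proof (cases "m0 ^ k \<ge> 0")
        case True
        then have "m0 ^ k = r ^ k" using m0 by (metis abs_of_nonneg power_abs)
        then show ?thesis unfolding R_def using m0 by (auto intro!: image_eqI[of _ _ m0])
      next
        case False
        then have "-(m0 ^ k) = r ^ k" using m0 by (metis abs_of_neg not_le power_abs)
        then show ?thesis unfolding R_def using m0 by (auto intro!: image_eqI[of _ _ m0])
      qed
    qed
    have "second_eigenvalue (dilation n \<pi> Q) = r ^ k"
      unfolding second_eigenvalue_def eigenvalues_desc_def pr_eq second_largest[OF Rne Rle] maxR ..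
    then show ?thesis unfolding gamma_ddagger_def Q_def by simp
  qed
  have "gamma_dps n \<pi> P = (SUP k\<in>{1..}. (1 - r ^ k) / real k)"
    unfolding gamma_dps_def by (rule SUP_cong[OF refl]) (simp add: dd)
  also have "\<dots> = 1 - r" by (rule sup_bound[OF r0 r1])
  finally show ?thesis using gap by simp
qed


end
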